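(* (Failure of logical omniscience.) There exist a Hintikka tree $H$ and sentences $\varphi_1, \varphi_2$ of $L$ that are logically equivalent but satisfy $B(\varphi_1) \neq B(\varphi_2)$, where $B$ is the belief induced by $H$.
   Context: $L$ is a first-order language without equality with finitely many predicate symbols and no function or constant symbols. For $d \in \mathbb{N}$, $\Delta^{(d)}$ is the finite set of Hintikka constituents of depth $d$ with no free variables ($\Delta^{(0)} = \{\top\}$); every sentence $\varphi$ of quantifier depth $d$ is logically equivalent to the disjunction of a set $\mathrm{dnf}(\varphi) \subseteq \Delta^{(d)}$ (its Hintikka distributive normal form of depth $d$). $\mathrm{expand}(1,\delta^{(d)})\subseteq\Delta^{(d+1)}$ denotes the expansions of $\delta^{(d)}$. Refinement tree: on $\Delta = \bigcup_d \Delta^{(d)}$ put an edge from each $\delta^{(d)}$ to each member of $\mathrm{expand}(1,\delta^{(d)})$, keeping a constituent lying in several depth-$d$ expansions as child of only one of them. A Hintikka tree is a function $H: \Delta \to [0,1]$ with $H(\delta^{(0)}) = 1$ and $H(\delta) = \sum_{\delta' \text{ child of } \delta} H(\delta')$ for all $\delta$. Let $\Psi^\omega$ be the set of infinite root paths in the refinement tree with the topology generated by cylinders $[\delta^{(0)}\cdots\delta^{(d)}]$ (paths with that prefix), and $\beta$ the unique Borel probability measure with $\beta([\delta^{(0)}\cdots\delta^{(d)}]) = H(\delta^{(d)})$. The belief in a sentence $\varphi$ of depth $d$ is $B(\varphi) = \sum_{\delta^{(d)} \in \mathrm{dnf}(\varphi)} \beta([\delta^{(0)} \cdots \delta^{(d)}])$,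 where $\delta^{(0)}\cdots\delta^{(d)}$ is the root path to $\delta^{(d)}$. *)

theory Defs
  imports Complex_Main "HOL-Library.FSet"
begin

text \<open>Predicate symbols are the elements of a finite type 'p, with an arity function.
  Variables are natural numbers.  The other connectives and the universal
  quantifier are the usual abbreviations.\<close>

datatype 'p fm = Atom 'p "nat list" | Neg "'p fm" | Conj "'p fm" "'p fm" | Ex nat "'p fm"

fun wf_fm :: "('p \<Rightarrow> nat) \<Rightarrow> 'p fm \<Rightarrow> bool" where
  "wf_fm ar (Atom p vs) = (length vs = ar p)"
| "wf_fm ar (Neg f) = wf_fm ar f"
| "wf_fm ar (Conj f g) = (wf_fm ar f \<and> wf_fm ar g)"
| "wf_fm ar (Ex x f) = wf_fm ar f"

fun fv :: "'p fm \<Rightarrow> nat set" where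
  "fv (Atom p vs) = set vs"
| "fv (Neg f) = fv f"
| "fv (Conj f g) = fv f \<union> fv g"
| "fv (Ex x f) = fv f - {x}"

fun qdepth :: "'p fm \<Rightarrow> nat" where
  "qdepth (Atom p vs) = 0"
| "qdepth (Neg f) = qdepth f"
| "qdepth (Conj f g) = max (qdepth f) (qdepth g)"
| "qdepth (Ex x f) = Suc (qdepth f)"

definition sentence :: "('p \<Rightarrow> nat) \<Rightarrow> 'p fm \<Rightarrow> bool" where
  "sentence ar f \<longleftrightarrow> wf_fm ar f \<and> fv f = {}"

text \<open>Tarski semantics. Structures have a nonempty domain D (a set of naturals; by
  downward Loewenheim-Skolem this suffices for logical equivalence).\<close>

fun sat :: "nat set \<Rightarrow> ('p \<Rightarrow> nat list \<Rightarrow> bool) \<Rightarrow> (nat \<Rightarrow> nat) \<Rightarrow> 'p fm \<Rightarrow> bool" where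
  "sat D I e (Atom p vs) = I p (map e vs)"
| "sat D I e (Neg f) = (\<not> sat D I e f)"
| "sat D I e (Conj f g) = (sat D I e f \<and> sat D I e g)"
| "sat D I e (Ex x f) = (\<exists>a\<in>D. sat D I (e(x := a)) f)"

definition log_equiv :: "'p fm \<Rightarrow> 'p fm \<Rightarrow> bool" where
  "log_equiv f g \<longleftrightarrow>
     (\<forall>D I e. D \<noteq> {} \<longrightarrow> (\<forall>x. e x \<in> D) \<longrightarrow> (sat D I e f \<longleftrightarrow> sat D I e g))"

text \<open>An (attributive) constituent with k free variables (positions 0..k-1) is represented
  by its tree structure: Cst A G stands for
    (conjunction of the atoms in the variables 0..k-1 that contain variable k-1,
     positive exactly for those in A)
    \<and> (\<And>\<gamma>\<in>G. \<exists>x_k. \<gamma>) \<and> \<forall>x_k. \<Or>\<gamma>\<in>G. \<gamma>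
  where G is a set of constituents with k+1 free variables and one less depth.\<close>

datatype 'p cst = Cst "('p \<times> nat list) fset" "'p cst fset"

fun cst_atoms :: "'p cst \<Rightarrow> ('p \<times> nat list) fset" where
  "cst_atoms (Cst A G) = A"

fun cst_children :: "'p cst \<Rightarrow> 'p cst fset" where
  "cst_children (Cst A G) = G"

definition new_atoms :: "('p \<Rightarrow> nat) \<Rightarrow> nat \<Rightarrow> ('p \<times> nat list) set" where
  "new_atoms ar k = {(p, vs). 0 < k \<and> length vs = ar p \<and> set vs \<subseteq> {..<k} \<and> k - 1 \<in> set vs}"

text \<open>Gam ar d k: constituents of depth d with k free variables.\<close>
fun Gam :: "('p \<Rightarrow> nat) \<Rightarrow> nat \<Rightarrow> nat \<Rightarrow> 'p cst set" where
  "Gam ar 0 k = {Cst A {||} | A. fset A \<subseteq> new_atoms ar k}"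
| "Gam ar (Suc d) k = {Cst A G | A G. fset A \<subseteq> new_atoms ar k \<and> fset G \<subseteq> Gam ar d (Suc k)}"

definition Delta :: "('p \<Rightarrow> nat) \<Rightarrow> nat \<Rightarrow> 'p cst set" where
  "Delta ar d = Gam ar d 0"

definition top_cst :: "'p cst" where
  "top_cst = Cst {||} {||}"

fun trunc :: "nat \<Rightarrow> 'p cst \<Rightarrow> 'p cst" where
  "trunc 0 (Cst A G) = Cst A {||}"
| "trunc (Suc n) (Cst A G) = Cst A (fimage (trunc n) G)"

text \<open>Each constituent has a unique reduct, hence lies in exactly one such set, so these are
  exactly the children of delta in the refinement tree.\<close>
definition expand1 :: "('p \<Rightarrow> nat) \<Rightarrow> nat \<Rightarrow> 'p cst \<Rightarrow> 'p cst set" where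
  "expand1 ar d \<delta> = {\<delta>' \<in> Delta ar (Suc d). trunc d \<delta>' = \<delta>}"

text \<open>Evaluation of a formula along a path cs = [c_0,...,c_k] of constituents
  (c_j has j free variables); sigma maps formula variables to variable positions.  This is how Hintikka's expansion procedure
  determines which constituents occur in the normal form.\<close>

fun ev :: "'p cst list \<Rightarrow> (nat \<Rightarrow> nat) \<Rightarrow> 'p fm \<Rightarrow> bool" where
  "ev cs \<sigma> (Atom p vs) = ((p, map \<sigma> vs) |\<in>| cst_atoms (cs ! Suc (Max (set (map \<sigma> vs)))))"
| "ev cs \<sigma> (Neg f) = (\<not> ev cs \<sigma> f)"
| "ev cs \<sigma> (Conj f g) = (ev cs \<sigma> f \<and> ev cs \<sigma> g)"
| "ev cs \<sigma> (Ex x f) = (\<exists>\<gamma>\<in>fset (cst_children (last cs)). ev (cs @ [\<gamma>]) (\<sigma>(x := length cs - 1)) f)"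

definition dnf :: "('p \<Rightarrow> nat) \<Rightarrow> 'p fm \<Rightarrow> 'p cst set" where
  "dnf ar f = {\<delta> \<in> Delta ar (qdepth f). ev [\<delta>] (\<lambda>_. 0) f}"

text \<open>Nodes of the refinement tree are pairs (depth, constituent); H d delta is the
  value at the depth-d constituent delta.\<close>
definition hintikka_tree :: "('p \<Rightarrow> nat) \<Rightarrow> (nat \<Rightarrow> 'p cst \<Rightarrow> real) \<Rightarrow> bool" where
  "hintikka_tree ar H \<longleftrightarrow>
     (\<forall>d. \<forall>\<delta>\<in>Delta ar d. 0 \<le> H d \<delta> \<and> H d \<delta> \<le> 1) \<and>
     H 0 top_cst = 1 \<and>
     (\<forall>d. \<forall>\<delta>\<in>Delta ar d. H d \<delta> = (\<Sum>\<delta>'\<in>expand1 ar d \<delta>. H (Suc d) \<delta>'))"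

text \<open>The belief: beta of the cylinder of the root path to delta is by definition H(delta).\<close>
definition belief :: "('p \<Rightarrow> nat) \<Rightarrow> (nat \<Rightarrow> 'p cst \<Rightarrow> real) \<Rightarrow> 'p fm \<Rightarrow> real" where
  "belief ar H f = (\<Sum>\<delta>\<in>dnf ar f. H (qdepth f) \<delta>)"

end

theory Submission
  imports Defs
begin

lemma finite_new_atoms:
  fixes ar :: "'p::finite \<Rightarrow> nat"
  shows "finite (new_atoms ar k)"
proof -
  let ?m = "Max (range ar)"
  have "new_atoms ar k \<subseteq> (UNIV::'p set) \<times> {vs. set vs \<subseteq> {..<k} \<and> length vs \<le> ?m}"
    unfolding new_atoms_def by auto
  moreover have "finite ((UNIV::'p set) \<times> {vs. set vs \<subseteq> {..<k} \<and> length vs \<le> ?m})"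
    using finite_lists_length_le[of "{..<k}" ?m] by simp
  ultimately show ?thesis by (rule finite_subset)
qed

lemma finite_fsubsets: "finite N \<Longrightarrow> finite {A. fset A \<subseteq> N}"
proof -
  assume "finite N"
  have "{A. fset A \<subseteq> N} \<subseteq> Abs_fset ` Pow N"
    by (auto intro!: image_eqI[where x="fset _"] simp: fset_inverse)
  thus ?thesis using \<open>finite N\<close> by (meson finite_Pow_iff finite_imageI finite_subset)
qed

lemma finite_Gam:
  fixes ar :: "'p::finite \<Rightarrow> nat"
  shows "finite (Gam ar d k)"
proof (induction d arbitrary: k)
  case 0
  have "Gam ar 0 k = (\<lambda>A. Cst A {||}) ` {A. fset A \<subseteq> new_atoms ar k}" by auto
  thus ?case using finite_fsubsets[OF finite_new_atoms[of ar k]] by simp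
next
  case (Suc d)
  have "Gam ar (Suc d) k = (\<lambda>(A,G). Cst A G) ` ({A. fset A \<subseteq> new_atoms ar k} \<times> {G. fset G \<subseteq> Gam ar d (Suc k)})"
    by auto
  thus ?case using finite_fsubsets[OF finite_new_atoms[of ar k]] finite_fsubsets[OF Suc.IH] by simp
qed

lemma finite_Delta: "finite (Delta (ar::'p::finite \<Rightarrow> nat) d)"
  unfolding Delta_def by (rule finite_Gam)

definition pc :: "nat \<Rightarrow> 'p cst" where
  "pc d = (if d = 0 then top_cst else Cst {||} {|Cst {||} {||}|})"

lemma empty_Gam: "Cst {||} {||} \<in> Gam ar d k"
  by (cases d) auto

lemma pc_Delta: "pc d \<in> Delta ar d"
  unfolding pc_def Delta_def top_cst_def
  by (cases d) (auto intro: empty_Gam)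

lemma trunc_empty: "trunc n (Cst {||} {||}) = Cst {||} {||}"
  by (cases n) auto

lemma trunc_pc: "trunc d (pc (Suc d)) = pc d"
  unfolding pc_def top_cst_def
  by (cases d) (auto simp: trunc_empty)

lemma hint: "hintikka_tree (ar::'p::finite \<Rightarrow> nat) (\<lambda>d \<delta>. if \<delta> = pc d then 1 else (0::real))"
  unfolding hintikka_tree_def
proof (intro conjI allI ballI)
  show "(if top_cst = pc 0 then 1 else 0) = (1::real)" by (simp add: pc_def)
next
  fix d and \<delta> :: "'p cst"
  assume "\<delta> \<in> Delta ar d"
  have fin: "finite (expand1 ar d \<delta>)" unfolding expand1_def
    using finite_Delta[of ar "Suc d"] by (rule finite_subset[rotated]) auto
  show "(if \<delta> = pc d then 1 else 0) = (\<Sum>\<delta>'\<in>expand1 ar d \<delta>. if \<delta>' = pc (Suc d) then 1 else (0::real))"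
    using sum.delta[OF fin, of "pc (Suc d)" "\<lambda>_. 1::real"] pc_Delta[of "Suc d" ar] trunc_pc[of d]
    by (auto simp: expand1_def)
qed auto


theorem mainTheorem5:
  fixes arity :: "'p::finite \<Rightarrow> nat"
  assumes "\<forall>p. 0 < arity p"
  shows "\<exists>H \<phi>1 \<phi>2. hintikka_tree arity H \<and> sentence arity \<phi>1 \<and> sentence arity \<phi>2 \<and>
           log_equiv \<phi>1 \<phi>2 \<and> belief arity H \<phi>1 \<noteq> belief arity H \<phi>2"
proof -
  define q :: 'p where "q = undefined"
  define a where "a = Atom q (replicate (arity q) 0)"
  define T where "T = Neg (Conj a (Neg a))"
  define H :: "nat \<Rightarrow> 'p cst \<Rightarrow> real" where "H = (\<lambda>d \<delta>. if \<delta> = pc d then 1 else (0::real))"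
  have fvT: "fv T = {0}" using assms unfolding T_def a_def by (cases "arity q") (auto, metis less_irrefl)
  have qT: "qdepth T = 0" unfolding T_def a_def by simp
  have wfT: "wf_fm arity T" unfolding T_def a_def by simp
  have s1: "sentence arity (Ex 0 T)" using fvT wfT unfolding sentence_def by simp
  have s2: "sentence arity (Ex 0 (Ex 0 T))" using fvT wfT unfolding sentence_def by simp
  have le: "log_equiv (Ex 0 T) (Ex 0 (Ex 0 T))"
    unfolding log_equiv_def T_def by auto
  have d1: "pc 1 \<in> dnf arity (Ex 0 T)"
    using pc_Delta[of 1 arity] unfolding dnf_def T_def a_def by (simp add: pc_def)
  have d2: "pc 2 \<notin> dnf arity (Ex 0 (Ex 0 T))"
    unfolding dnf_def T_def a_def by (simp add: pc_def)
  have fin1: "finite (dnf arity (Ex 0 T))"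
    using finite_Delta[of arity 1] unfolding dnf_def T_def a_def by (auto intro: finite_subset[rotated])
  have b1: "belief arity H (Ex 0 T) = 1"
    unfolding belief_def H_def using sum.delta[OF fin1, of "pc 1" "\<lambda>_. 1::real"] d1 qT by simp
  have b2: "belief arity H (Ex 0 (Ex 0 T)) = 0"
    unfolding belief_def H_def using d2 qT by (intro sum.neutral) (auto simp: numeral_2_eq_2)
  show ?thesis
    using hint[of arity] s1 s2 le b1 b2 unfolding H_def[symmetric] by fastforce
qed

end
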